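(* Let $X_o$ be a compact Hausdorff space, $\theta$ a homeomorphism of $X_o$ such that $(X_o,\theta)$ is topologically ergodic, $f\in C(X_o;\mathbb{T})$, and $\Phi_{\theta,f}(x,w):=(\theta(x),f(x)w)$ acting on $C(X_o\times\mathbb{T})$ by $h\mapsto h\circ\Phi_{\theta,f}$. Then the fixed-point subalgebra $C(X_o\times\mathbb{T})^{\Phi_{\theta,f}}$ is $*$-isomorphic either to $\mathbb{C}$ or to $C(\mathbb{T})$, the first case occurring exactly when $(C(X_o\times\mathbb{T}),\Phi_{\theta,f})$ is topologically ergodic.
   Context: $(X_o,\theta)$ topologically ergodic means the only $h\in C(X_o)$ with $h\circ\theta=h$ are constants; similarly $(C(X_o\times\mathbb{T}),\Phi_{\theta,f})$ is topologically ergodic if its fixed-point subalgebra $\{h\mid h\circ\Phi_{\theta,f}=h\}$ consists of constants. *)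

theory Defs
  imports "HOL-Analysis.Analysis"
begin

definition circle :: "complex set" where
  "circle = sphere 0 1"

text \<open>C(D): continuous complex functions on D, made extensional (value 0 outside D)
  so that each element of C(D) has a unique representative.\<close>
definition Cfun :: "'a::topological_space set \<Rightarrow> ('a \<Rightarrow> complex) set" where
  "Cfun D = {h. continuous_on D h \<and> (\<forall>p. p \<notin> D \<longrightarrow> h p = 0)}"

definition top_ergodic :: "('a::topological_space \<Rightarrow> 'a) \<Rightarrow> bool" where
  "top_ergodic \<theta> \<longleftrightarrow>
     (\<forall>h::'a \<Rightarrow> complex. continuous_on UNIV h \<and> h \<circ> \<theta> = h \<longrightarrow> (\<exists>c. h = (\<lambda>_. c)))"

definition skew :: "('a \<Rightarrow> 'a) \<Rightarrow> ('a \<Rightarrow> complex) \<Rightarrow> 'a \<times> complex \<Rightarrow> 'a \<times> complex" where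
  "skew \<theta> f = (\<lambda>(x, w). (\<theta> x, f x * w))"

definition fixed_alg :: "('a::topological_space \<Rightarrow> 'a) \<Rightarrow> ('a \<Rightarrow> complex) \<Rightarrow> ('a \<times> complex \<Rightarrow> complex) set" where
  "fixed_alg \<theta> f = {h \<in> Cfun (UNIV \<times> circle). \<forall>p \<in> UNIV \<times> circle. h (skew \<theta> f p) = h p}"

definition skew_ergodic :: "('a::topological_space \<Rightarrow> 'a) \<Rightarrow> ('a \<Rightarrow> complex) \<Rightarrow> bool" where
  "skew_ergodic \<theta> f \<longleftrightarrow>
     (\<forall>h \<in> fixed_alg \<theta> f. \<exists>c. \<forall>p \<in> UNIV \<times> circle. h p = c)"

definition star_iso :: "('a \<Rightarrow> complex) set \<Rightarrow> ('b \<Rightarrow> complex) set \<Rightarrow> (('a \<Rightarrow> complex) \<Rightarrow> ('b \<Rightarrow> complex)) \<Rightarrow> bool" where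
  "star_iso A B \<phi> \<longleftrightarrow> bij_betw \<phi> A B \<and>
     (\<forall>g\<in>A. \<forall>h\<in>A. \<phi> (\<lambda>p. g p + h p) = (\<lambda>q. \<phi> g q + \<phi> h q)) \<and>
     (\<forall>g\<in>A. \<forall>h\<in>A. \<phi> (\<lambda>p. g p * h p) = (\<lambda>q. \<phi> g q * \<phi> h q)) \<and>
     (\<forall>c. \<forall>h\<in>A. \<phi> (\<lambda>p. c * h p) = (\<lambda>q. c * \<phi> h q)) \<and>
     (\<forall>h\<in>A. \<phi> (\<lambda>p. cnj (h p)) = (\<lambda>q. cnj (\<phi> h q)))"

definition star_isomorphic :: "('a \<Rightarrow> complex) set \<Rightarrow> ('b \<Rightarrow> complex) set \<Rightarrow> bool" where
  "star_isomorphic A B \<longleftrightarrow> (\<exists>\<phi>. star_iso A B \<phi>)"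

definition star_isomorphic_to_C :: "('a \<Rightarrow> complex) set \<Rightarrow> bool" where
  "star_isomorphic_to_C A \<longleftrightarrow> (\<exists>\<phi>. bij_betw \<phi> A (UNIV :: complex set) \<and>
     (\<forall>g\<in>A. \<forall>h\<in>A. \<phi> (\<lambda>p. g p + h p) = \<phi> g + \<phi> h) \<and>
     (\<forall>g\<in>A. \<forall>h\<in>A. \<phi> (\<lambda>p. g p * h p) = \<phi> g * \<phi> h) \<and>
     (\<forall>c. \<forall>h\<in>A. \<phi> (\<lambda>p. c * h p) = c * \<phi> h) \<and>
     (\<forall>h\<in>A. \<phi> (\<lambda>p. cnj (h p)) = cnj (\<phi> h)))"

end

theory Submission
  imports Defs "HOL-Library.Real_Mod"
begin

lemma in_circle: "w \<in> circle \<longleftrightarrow> norm w = 1"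
  by (simp add: circle_def)

lemma one_in_circle [simp]: "1 \<in> circle" by (simp add: in_circle)

lemma compact_circle: "compact circle"
  by (simp add: circle_def)

lemma circle_mult: "a \<in> circle \<Longrightarrow> b \<in> circle \<Longrightarrow> a * b \<in> circle"
  by (simp add: in_circle norm_mult)

lemma circle_mult_iff: "a \<in> circle \<Longrightarrow> a * b \<in> circle \<longleftrightarrow> b \<in> circle"
  by (simp add: in_circle norm_mult)

lemma circle_cnj: "a \<in> circle \<Longrightarrow> cnj a \<in> circle"
  by (simp add: in_circle)

lemma circle_cnj_mult: "a \<in> circle \<Longrightarrow> cnj a * a = 1"
  by (metis complex_norm_square in_circle mult.commute of_real_1 power_one)

lemma circle_mult_cnj: "a \<in> circle \<Longrightarrow> a * cnj a = 1"
  using circle_cnj_mult by (simp add: mult.commute)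

lemma fixed_algD:
  assumes "h \<in> fixed_alg \<theta> f"
  shows "continuous_on (UNIV \<times> circle) h" "\<And>p. p \<notin> UNIV \<times> circle \<Longrightarrow> h p = 0"
    "\<And>x w. w \<in> circle \<Longrightarrow> h (\<theta> x, f x * w) = h (x, w)"
  using assms by (auto simp: fixed_alg_def Cfun_def skew_def)

lemma fixed_algI:
  assumes "continuous_on (UNIV \<times> circle) h" "\<And>x w. w \<notin> circle \<Longrightarrow> h (x, w) = 0"
    "\<And>x w. w \<in> circle \<Longrightarrow> h (\<theta> x, f x * w) = h (x, w)"
  shows "h \<in> fixed_alg \<theta> f"
  using assms by (auto simp: fixed_alg_def Cfun_def skew_def)

lemma cont_fib:
  assumes "continuous_on (UNIV \<times> circle) h"
  shows "continuous_on circle (\<lambda>w. h (x, w))"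
  by (rule continuous_on_compose2[OF assms]) (auto intro!: continuous_intros)

definition sup_fib :: "('a \<times> complex \<Rightarrow> complex) \<Rightarrow> 'a \<Rightarrow> real" where
  "sup_fib h x = Sup ((\<lambda>w. norm (h (x, w))) ` circle)"

lemma sup_fib_upper:
  assumes "continuous_on (UNIV \<times> circle) h" "w \<in> circle"
  shows "norm (h (x, w)) \<le> sup_fib h x"
proof -
  have "compact ((\<lambda>w. norm (h (x, w))) ` circle)"
    by (intro compact_continuous_image continuous_on_norm cont_fib assms compact_circle)
  then have "bdd_above ((\<lambda>w. norm (h (x, w))) ` circle)"
    by (simp add: bounded_imp_bdd_above compact_imp_bounded)
  then show ?thesis unfolding sup_fib_def using assms(2) by (rule cSUP_upper2) auto
qed

lemma sup_fib_least:
  assumes "\<And>w. w \<in> circle \<Longrightarrow> norm (h (x, w)) \<le> M"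
  shows "sup_fib h x \<le> M"
  unfolding sup_fib_def by (rule cSUP_least) (use assms one_in_circle in blast)+

lemma sup_fib_cont:
  fixes h :: "'a::t2_space \<times> complex \<Rightarrow> complex"
  assumes "continuous_on (UNIV \<times> circle) h"
  shows "continuous_on UNIV (sup_fib h)"
proof -
  have "isCont (sup_fib h) x0" for x0
    unfolding continuous_at tendsto_iff
  proof (intro allI impI)
    fix e :: real assume e: "e > 0"
    then have "e/2 > 0" by simp
    from continuous_on_prod_compactE[OF assms compact_circle _ this, of x0]
    obtain X0 where X0: "x0 \<in> X0" "open X0"
      "\<forall>x\<in>X0 \<inter> UNIV. \<forall>t \<in> circle. dist (h (x, t)) (h (x0, t)) \<le> e/2" by auto
    have "dist (sup_fib h x) (sup_fib h x0) < e" if "x \<in> X0" for x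
    proof -
      have a: "sup_fib h x \<le> sup_fib h x0 + e/2"
      proof (rule sup_fib_least)
        fix w assume w: "w \<in> circle"
        have "norm (h (x, w)) \<le> norm (h (x0, w)) + dist (h (x, w)) (h (x0, w))"
          by (simp add: dist_norm norm_triangle_sub)
        also have "\<dots> \<le> sup_fib h x0 + e/2"
          using X0(3) that w sup_fib_upper[OF assms w, of x0] by force
        finally show "norm (h (x, w)) \<le> sup_fib h x0 + e/2" .
      qed
      have b: "sup_fib h x0 \<le> sup_fib h x + e/2"
      proof (rule sup_fib_least)
        fix w assume w: "w \<in> circle"
        have "norm (h (x0, w)) \<le> norm (h (x, w)) + dist (h (x, w)) (h (x0, w))"
          by (metis dist_commute dist_norm norm_triangle_sub)
        also have "\<dots> \<le> sup_fib h x + e/2"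
          using X0(3) that w sup_fib_upper[OF assms w, of x] by force
        finally show "norm (h (x0, w)) \<le> sup_fib h x + e/2" .
      qed
      show ?thesis using a b e by (simp add: dist_real_def abs_if)
    qed
    then show "\<forall>\<^sub>F x in at x0. dist (sup_fib h x) (sup_fib h x0) < e"
      unfolding eventually_at_topological using X0 by blast
  qed
  then show ?thesis by (simp add: continuous_at_imp_continuous_on)
qed

definition cst :: "complex \<Rightarrow> 'b \<times> complex \<Rightarrow> complex" where
  "cst c = (\<lambda>(x, w). if w \<in> circle then c else 0)"

definition rot :: "complex \<Rightarrow> ('b \<times> complex \<Rightarrow> complex) \<Rightarrow> 'b \<times> complex \<Rightarrow> complex" where
  "rot c h = (\<lambda>(x, w). h (x, c * w))"

context
  fixes \<theta> :: "'a::t2_space \<Rightarrow> 'a" and f :: "'a \<Rightarrow> complex"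
  assumes erg: "top_ergodic \<theta>" and fc: "\<forall>x. f x \<in> circle"
begin

lemma erg_const:
  fixes g :: "'a \<Rightarrow> real"
  assumes "continuous_on UNIV g" "\<And>x. g (\<theta> x) = g x"
  shows "g x = g y"
proof -
  have "continuous_on UNIV (\<lambda>x. complex_of_real (g x))"
    by (intro continuous_intros assms)
  moreover have "(\<lambda>x. complex_of_real (g x)) \<circ> \<theta> = (\<lambda>x. complex_of_real (g x))"
    using assms(2) by (simp add: o_def)
  ultimately obtain c where "(\<lambda>x. complex_of_real (g x)) = (\<lambda>_. c)"
    using erg unfolding top_ergodic_def by blast
  then have "complex_of_real (g x) = complex_of_real (g y)" by metis
  then show ?thesis by simp
qed

lemma erg_const_c:
  fixes g :: "'a \<Rightarrow> complex"
  assumes "continuous_on UNIV g" "\<And>x. g (\<theta> x) = g x"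
  shows "g x = g y"
proof -
  have "g \<circ> \<theta> = g" using assms(2) by (simp add: o_def fun_eq_iff)
  then obtain c where "g = (\<lambda>_. c)"
    using erg assms(1) unfolding top_ergodic_def by blast
  then show ?thesis by simp
qed

lemma sup_fib_inv:
  assumes h: "h \<in> fixed_alg \<theta> f"
  shows "sup_fib h (\<theta> x) = sup_fib h x"
proof -
  have "(\<lambda>w. norm (h (\<theta> x, w))) ` circle = (\<lambda>w. norm (h (x, w))) ` circle"
  proof safe
    fix w assume w: "w \<in> circle"
    have v: "cnj (f x) * w \<in> circle" using fc w by (simp add: circle_mult circle_cnj)
    have "w = f x * (cnj (f x) * w)" using circle_mult_cnj[of "f x"] fc
      by (simp add: mult.assoc[symmetric])
    then have "norm (h (\<theta> x, w)) = norm (h (x, cnj (f x) * w))"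
      using fixed_algD(3)[OF h v, of x] by metis
    then show "norm (h (\<theta> x, w)) \<in> (\<lambda>w. norm (h (x, w))) ` circle" using v by blast
  next
    fix w assume w: "w \<in> circle"
    have v: "f x * w \<in> circle" using fc w by (simp add: circle_mult)
    have "norm (h (x, w)) = norm (h (\<theta> x, f x * w))"
      using fixed_algD(3)[OF h w, of x] by simp
    then show "norm (h (x, w)) \<in> (\<lambda>w. norm (h (\<theta> x, w))) ` circle" using v by blast
  qed
  then show ?thesis by (simp add: sup_fib_def)
qed

lemma sup_fib_const:
  assumes h: "h \<in> fixed_alg \<theta> f"
  shows "sup_fib h x = sup_fib h y"
  by (rule erg_const[OF sup_fib_cont[OF fixed_algD(1)[OF h]] sup_fib_inv[OF h]])

lemma fib_bound:
  assumes h: "h \<in> fixed_alg \<theta> f" and b: "\<And>w. w \<in> circle \<Longrightarrow> norm (h (y, w)) \<le> e"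
  shows "norm (h p) \<le> e"
proof (cases "p \<in> UNIV \<times> circle")
  case True
  then obtain x w where p: "p = (x, w)" "w \<in> circle" by auto
  have "norm (h (x, w)) \<le> sup_fib h x" by (rule sup_fib_upper[OF fixed_algD(1)[OF h] p(2)])
  also have "\<dots> = sup_fib h y" by (rule sup_fib_const[OF h])
  also have "\<dots> \<le> e" by (rule sup_fib_least) (rule b)
  finally show ?thesis using p by simp
next
  case False
  have "0 \<le> e" using b[OF one_in_circle] norm_ge_zero order_trans by blast
  then show ?thesis using fixed_algD(2)[OF h False] by simp
qed

lemma fib_zero:
  assumes h: "h \<in> fixed_alg \<theta> f" and b: "\<And>w. w \<in> circle \<Longrightarrow> h (y, w) = 0"
  shows "h p = 0"
  using fib_bound[OF h, of y 0 p] b by simp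

lemma fa_add: assumes "g \<in> fixed_alg \<theta> f" "h \<in> fixed_alg \<theta> f" shows "(\<lambda>p. g p + h p) \<in> fixed_alg \<theta> f"
  using fixed_algD[OF assms(1)] fixed_algD[OF assms(2)] by (intro fixed_algI) (auto intro!: continuous_intros)

lemma fa_diff: assumes "g \<in> fixed_alg \<theta> f" "h \<in> fixed_alg \<theta> f" shows "(\<lambda>p. g p - h p) \<in> fixed_alg \<theta> f"
  using fixed_algD[OF assms(1)] fixed_algD[OF assms(2)] by (intro fixed_algI) (auto intro!: continuous_intros)

lemma fa_mult: assumes "g \<in> fixed_alg \<theta> f" "h \<in> fixed_alg \<theta> f" shows "(\<lambda>p. g p * h p) \<in> fixed_alg \<theta> f"
  using fixed_algD[OF assms(1)] fixed_algD[OF assms(2)] by (intro fixed_algI) (auto intro!: continuous_intros)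

lemma fa_scale: assumes "h \<in> fixed_alg \<theta> f" shows "(\<lambda>p. c * h p) \<in> fixed_alg \<theta> f"
  using fixed_algD[OF assms(1)] by (intro fixed_algI) (auto intro!: continuous_intros)

lemma fa_cnj: assumes "h \<in> fixed_alg \<theta> f" shows "(\<lambda>p. cnj (h p)) \<in> fixed_alg \<theta> f"
  using fixed_algD[OF assms(1)] by (intro fixed_algI) (auto intro!: continuous_intros)

lemma cst_cont: "continuous_on (UNIV \<times> circle) (cst c)"
proof -
  have "continuous_on (UNIV \<times> circle) (\<lambda>p::'b \<times> complex. c)" by simp
  then show ?thesis by (rule continuous_on_cong[THEN iffD1, rotated 2]) (auto simp: cst_def)
qed

lemma fa_cst: "cst c \<in> fixed_alg \<theta> f"
  by (rule fixed_algI) (auto simp: cst_cont, auto simp: cst_def circle_mult_iff fc)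

lemma fa_rot:
  assumes h: "h \<in> fixed_alg \<theta> f" and c: "c \<in> circle"
  shows "rot c h \<in> fixed_alg \<theta> f"
proof (rule fixed_algI)
  have "continuous_on (UNIV \<times> circle) (\<lambda>p. h (fst p, c * snd p))"
    by (rule continuous_on_compose2[OF fixed_algD(1)[OF h]])
       (auto intro!: continuous_intros simp: circle_mult c)
  then show "continuous_on (UNIV \<times> circle) (rot c h)"
    by (simp add: rot_def case_prod_beta)
  show "rot c h (x, w) = 0" if "w \<notin> circle" for x w
    using that fixed_algD(2)[OF h] by (simp add: rot_def circle_mult_iff c)
  show "rot c h (\<theta> x, f x * w) = rot c h (x, w)" if "w \<in> circle" for x w
    using fixed_algD(3)[OF h, of "c * w" x] that c
    by (simp add: rot_def circle_mult mult.left_commute)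
qed

end

context
  fixes \<theta> :: "'a::t2_space \<Rightarrow> 'a" and f :: "'a \<Rightarrow> complex"
  assumes erg: "top_ergodic \<theta>" and fc: "\<forall>x. f x \<in> circle"
begin

lemma erg_cst:
  assumes se: "skew_ergodic \<theta> f" and h: "h \<in> fixed_alg \<theta> f"
  shows "h = cst (h (undefined, 1))"
proof -
  obtain c where c: "\<forall>p \<in> UNIV \<times> circle. h p = c" using se h unfolding skew_ergodic_def by blast
  have "h = cst c"
  proof
    fix p :: "'a \<times> complex"
    show "h p = cst c p" using c fixed_algD(2)[OF h, of p] by (cases p) (auto simp: cst_def split: if_splits)
  qed
  moreover have "h (undefined, 1) = c" using c by simp
  ultimately show ?thesis by simp
qed

lemma SE1:
  assumes se: "skew_ergodic \<theta> f"
  shows "star_isomorphic_to_C (fixed_alg \<theta> f)"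
  unfolding star_isomorphic_to_C_def
proof (intro exI conjI)
  let ?\<phi> = "\<lambda>h::'a \<times> complex \<Rightarrow> complex. h (undefined, 1)"
  show "bij_betw ?\<phi> (fixed_alg \<theta> f) UNIV"
    unfolding bij_betw_def
  proof
    show "inj_on ?\<phi> (fixed_alg \<theta> f)"
    proof (rule inj_onI)
      fix g h assume g: "g \<in> fixed_alg \<theta> f" and h: "h \<in> fixed_alg \<theta> f"
        and e: "g (undefined, 1) = h (undefined, 1)"
      show "g = h" using erg_cst[OF se g] erg_cst[OF se h] e by simp
    qed
    have "c \<in> ?\<phi> ` fixed_alg \<theta> f" for c
      using fa_cst[OF erg fc, of c] by (intro image_eqI[of _ _ "cst c"]) (auto simp: cst_def)
    then show "?\<phi> ` fixed_alg \<theta> f = UNIV" by blast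
  qed
qed simp_all

lemma SE2:
  assumes si: "star_isomorphic_to_C (fixed_alg \<theta> f)"
  shows "skew_ergodic \<theta> f"
proof -
  let ?A = "fixed_alg \<theta> f"
  obtain \<phi> where bij: "bij_betw \<phi> ?A (UNIV :: complex set)"
    and mul: "\<forall>g\<in>?A. \<forall>h\<in>?A. \<phi> (\<lambda>p. g p * h p) = \<phi> g * \<phi> h"
    and sc: "\<forall>c. \<forall>h\<in>?A. \<phi> (\<lambda>p. c * h p) = c * \<phi> h"
    using si unfolding star_isomorphic_to_C_def by blast
  have one: "cst 1 \<in> ?A" by (rule fa_cst[OF erg fc])
  have unit: "(\<lambda>p. cst 1 p * h p) = h" if "h \<in> ?A" for h
    using fixed_algD(2)[OF that] by (auto simp: cst_def fun_eq_iff split: if_splits)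
  have "1 \<in> \<phi> ` ?A" using bij unfolding bij_betw_def by simp
  then obtain h1 where h1: "h1 \<in> ?A" "\<phi> h1 = 1" by (metis imageE)
  have "\<phi> (cst 1) * \<phi> h1 = \<phi> (\<lambda>p. cst 1 p * h1 p)" using mul one h1(1) by simp
  also have "\<dots> = \<phi> h1" by (simp add: unit[OF h1(1)])
  finally have "\<phi> (cst 1) * \<phi> h1 = \<phi> h1" .
  then have p1: "\<phi> (cst 1) = 1" using h1 by simp
  have cstc: "(\<lambda>p. c * cst 1 p) = cst c" for c by (auto simp: cst_def fun_eq_iff split: if_splits)
  have pc: "\<phi> (cst c) = c" for c
  proof -
    have "\<phi> (\<lambda>p. c * cst 1 p) = c * \<phi> (cst 1)" using sc one by blast
    then show ?thesis using p1 by (simp add: cstc)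
  qed
  show ?thesis unfolding skew_ergodic_def
  proof
    fix h assume h: "h \<in> ?A"
    have "\<phi> (cst (\<phi> h)) = \<phi> h" by (rule pc)
    moreover have "inj_on \<phi> ?A" using bij by (simp add: bij_betw_def)
    ultimately have "cst (\<phi> h) = h"
      using fa_cst[OF erg fc] h by (simp add: inj_on_eq_iff)
    then have "\<forall>p\<in>UNIV \<times> circle. h p = \<phi> h"
    proof (intro ballI)
      fix p :: "'a \<times> complex" assume p: "p \<in> UNIV \<times> circle"
      assume e: "cst (\<phi> h) = h"
      have "h p = cst (\<phi> h) p" using e by simp
      also have "\<dots> = \<phi> h" using p by (cases p) (simp add: cst_def)
      finally show "h p = \<phi> h" .
    qed
    then show "\<exists>c. \<forall>p\<in>UNIV \<times> circle. h p = c" by blast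
  qed
qed

end

lemma circle_cis: "c \<in> circle \<Longrightarrow> cis (Arg c) = c"
proof -
  assume c: "c \<in> circle"
  then have "norm c = 1" by (simp add: in_circle)
  then have "c \<noteq> 0" by auto
  then show ?thesis using cis_Arg[of c] \<open>norm c = 1\<close> by (simp add: sgn_div_norm)
qed

lemma cis_in_circle [simp]: "cis t \<in> circle"
  by (simp add: in_circle)

lemma cis_int_mult:
  fixes n :: int
  shows "cis (of_int n * t) = (if n \<ge> 0 then cis t ^ nat n else cnj (cis t) ^ nat (- n))"
proof (cases "n \<ge> 0")
  case True
  then have e: "real_of_int n = real (nat n)" by simp
  have "cis (of_int n * t) = cis (real (nat n) * t)" by (simp only: e)
  also have "\<dots> = cis t ^ nat n" by (rule Complex.DeMoivre[symmetric])
  finally show ?thesis using True by (simp only: if_True)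
next
  case False
  then have "of_int n * t = real (nat (-n)) * (-t)" by simp
  then have "cis (of_int n * t) = cis (real (nat (-n)) * (-t))" by (simp only:)
  also have "\<dots> = cnj (cis t) ^ nat (-n)" by (simp only: Complex.DeMoivre cis_cnj)
  finally show ?thesis using False by simp
qed

lemma circle_subgroup:
  assumes cl: "closed G" and sub: "G \<subseteq> circle" and one: "1 \<in> G"
    and mul: "\<And>c d. c \<in> G \<Longrightarrow> d \<in> G \<Longrightarrow> c * d \<in> G"
    and inv: "\<And>c. c \<in> G \<Longrightarrow> cnj c \<in> G"
  shows "G = circle \<or> (\<exists>m::nat. m > 0 \<and> G = {c \<in> circle. c ^ m = 1})"
proof -
  define T where "T = {t. cis t \<in> G}"
  have Tcl: "closed T"
  proof -
    have "continuous_on UNIV (\<lambda>x. cis x)" by (intro continuous_intros)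
    then have "isCont cis x" for x by (simp add: continuous_on_eq_continuous_at)
    then show ?thesis using continuous_closed_vimage[OF cl, of cis] by (simp add: vimage_def T_def)
  qed
  have Tadd: "s \<in> T \<Longrightarrow> t \<in> T \<Longrightarrow> s + t \<in> T" for s t
    using mul by (auto simp: T_def cis_mult[symmetric])
  have Tneg: "t \<in> T \<Longrightarrow> - t \<in> T" for t
    using inv by (auto simp: T_def cis_cnj[symmetric])
  have T0: "0 \<in> T" using one by (simp add: T_def)
  have Tdiff: "s \<in> T \<Longrightarrow> t \<in> T \<Longrightarrow> s - t \<in> T" for s t
    using Tadd Tneg by (metis diff_conv_add_uminus)
  have Gpow: "c \<in> G \<Longrightarrow> c ^ k \<in> G" for c k
    by (induct k) (auto simp: one mul)
  have Tint: "t \<in> T \<Longrightarrow> of_int n * t \<in> T" for t n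
    using Gpow inv by (auto simp: T_def cis_int_mult)
  have T2pi: "2 * pi \<in> T" using one by (simp add: T_def)
  have GT: "c \<in> G \<longleftrightarrow> c \<in> circle \<and> Arg c \<in> T" for c
    using sub circle_cis by (auto simp: T_def)
  show ?thesis
  proof (cases "\<forall>e>0. \<exists>t\<in>T. 0 < t \<and> t < e")
    case True
    have "r \<in> T" for r
    proof -
      have "\<forall>e>0. \<exists>y\<in>T. dist y r < e"
      proof (intro allI impI)
        fix e :: real assume "e > 0"
        then obtain s where s: "s \<in> T" "0 < s" "s < e" using True by blast
        define n where "n = floor (r / s)"
        have "of_int n * s \<le> r" using floor_divide_lower[OF s(2), of r] unfolding n_def .
        moreover have "r < (of_int n + 1) * s" using floor_divide_upper[OF s(2), of r] unfolding n_def .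
        then have "r < of_int n * s + s" by (simp add: algebra_simps)
        ultimately have "dist (of_int n * s) r < e" using s by (simp add: dist_real_def)
        then show "\<exists>y\<in>T. dist y r < e" using Tint[OF s(1)] by blast
      qed
      then show ?thesis using closed_approachable[OF Tcl] by blast
    qed
    then have "G = circle" using sub GT by auto
    then show ?thesis by blast
  next
    case False
    then obtain e where e: "e > 0" "\<And>t. t \<in> T \<Longrightarrow> \<not> (0 < t \<and> t < e)" by auto
    define P where "P = T \<inter> {e..}"
    have Pcl: "closed P" unfolding P_def using Tcl by (intro closed_Int) auto
    have "2 * pi \<in> P" using T2pi e pi_gt_zero unfolding P_def by force
    then have Pne: "P \<noteq> {}" by blast
    have Pbdd: "bdd_below P" unfolding P_def by (rule bdd_belowI[of _ e]) auto
    define a where "a = Inf P"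
    have aP: "a \<in> P" unfolding a_def by (rule closed_contains_Inf[OF Pne Pbdd Pcl])
    then have aT: "a \<in> T" and ae: "a \<ge> e" by (auto simp: P_def)
    then have apos: "a > 0" using e by linarith
    have mult_a: "\<exists>k::int. t = of_int k * a" if t: "t \<in> T" for t
    proof -
      define k where "k = floor (t / a)"
      define r where "r = t - of_int k * a"
      have rT: "r \<in> T" unfolding r_def by (intro Tdiff t Tint aT)
      have r0: "0 \<le> r" unfolding r_def k_def using floor_divide_lower[OF apos, of t] by simp
      have "t < (of_int k + 1) * a" unfolding k_def using floor_divide_upper[OF apos, of t] .
      then have ra: "r < a" unfolding r_def by (simp add: algebra_simps)
      have "r = 0"
      proof (rule ccontr)
        assume "r \<noteq> 0"
        then have "r > 0" using r0 by simp
        then have "r \<ge> e" using e(2)[OF rT] by linarith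
        then have "r \<in> P" using rT by (simp add: P_def)
        then have "a \<le> r" unfolding a_def by (rule cInf_lower[OF _ Pbdd])
        then show False using ra by simp
      qed
      then show ?thesis unfolding r_def by auto
    qed
    obtain k where k: "2 * pi = of_int k * a" using mult_a[OF T2pi] by blast
    have "0 < of_int k * a" using k pi_gt_zero by (metis mult_pos_pos zero_less_numeral)
    then have "(0::real) < of_int k" using apos by (rule zero_less_mult_pos2)
    then have kpos: "k > 0" by simp
    define m where "m = nat k"
    have mk: "real m = of_int k" using kpos by (simp add: m_def)
    have "G = {c \<in> circle. c ^ m = 1}"
    proof safe
      fix c assume c: "c \<in> G"
      then show "c \<in> circle" using sub by blast
      obtain j where j: "Arg c = of_int j * a" using GT c mult_a by blast
      have "c ^ m = cis (real m * Arg c)" using circle_cis[of c] sub c by (metis Complex.DeMoivre subsetD)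
      also have "real m * Arg c = 2 * pi * of_int j" using j k mk by (simp add: algebra_simps)
      also have "cis \<dots> = 1" by simp
      finally show "c ^ m = 1" .
    next
      fix c assume c: "c \<in> circle" "c ^ m = 1"
      have "cis (real m * Arg c) = 1" using c circle_cis[of c] by (metis Complex.DeMoivre)
      then obtain n where n: "real m * Arg c = of_int n * (2 * pi)" by (auto simp: cis_eq_1_iff)
      have "real m * Arg c = real m * (of_int n * a)" using n k mk by (simp add: algebra_simps)
      then have "Arg c = of_int n * a" using kpos mk by simp
      then have "Arg c \<in> T" using Tint[OF aT] by simp
      then show "c \<in> G" using GT c by blast
    qed
    moreover have "m > 0" using kpos by (simp add: m_def)
    ultimately show ?thesis by blast
  qed
qed

definition Gp :: "('b \<times> complex \<Rightarrow> complex) set \<Rightarrow> complex set" where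
  "Gp A = {c \<in> circle. \<forall>h\<in>A. \<forall>x w. w \<in> circle \<longrightarrow> h (x, c * w) = h (x, w)}"

lemma Gp_sub: "Gp A \<subseteq> circle" by (auto simp: Gp_def)
lemma Gp_one: "1 \<in> Gp A" by (auto simp: Gp_def)
lemma Gp_mult: "c \<in> Gp A \<Longrightarrow> d \<in> Gp A \<Longrightarrow> c * d \<in> Gp A"
  by (auto simp: Gp_def circle_mult mult.assoc)
lemma Gp_cnj: assumes c: "c \<in> Gp A" shows "cnj c \<in> Gp A"
proof -
  have cc: "c \<in> circle" using c by (auto simp: Gp_def)
  have "h (x, cnj c * w) = h (x, w)" if "h \<in> A" "w \<in> circle" for h x w
  proof -
    have "h (x, c * (cnj c * w)) = h (x, cnj c * w)"
      using c that by (auto simp: Gp_def circle_mult circle_cnj cc)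
    moreover have "c * (cnj c * w) = w" using circle_mult_cnj[OF cc] by (simp add: mult.assoc[symmetric])
    ultimately show ?thesis by simp
  qed
  then show ?thesis using cc by (auto simp: Gp_def circle_cnj)
qed

lemma Gp_closed:
  assumes cont: "\<And>h. h \<in> A \<Longrightarrow> continuous_on (UNIV \<times> circle) h"
  shows "closed (Gp A)"
  unfolding closed_sequential_limits
proof (intro allI impI, elim conjE)
  fix cs c assume cs: "\<forall>n. cs n \<in> Gp A" and lim: "cs \<longlonglongrightarrow> c"
  have cc: "c \<in> circle"
    using closed_sequential_limits[THEN iffD1, OF closed_sphere[of 0 1]] cs lim Gp_sub
    unfolding circle_def by blast
  have "h (x, c * w) = h (x, w)" if h: "h \<in> A" and w: "w \<in> circle" for h x w
  proof -
    have csc: "cs n \<in> circle" for n using cs Gp_sub by blast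
    have t: "((\<lambda>n. (x, cs n * w)) \<longlongrightarrow> (x, c * w)) sequentially"
      by (intro tendsto_intros lim)
    have "((\<lambda>n. h (x, cs n * w)) \<longlongrightarrow> h (x, c * w)) sequentially"
      by (rule continuous_on_tendsto_compose[OF cont[OF h] t])
         (simp_all add: csc circle_mult w cc)
    moreover have "(\<lambda>n. h (x, cs n * w)) = (\<lambda>n. h (x, w))"
      using cs h w by (auto simp: Gp_def)
    ultimately show ?thesis by (simp add: LIMSEQ_const_iff)
  qed
  then show "c \<in> Gp A" using cc by (auto simp: Gp_def)
qed

lemma quot_cont:
  fixes p :: "'b::topological_space \<Rightarrow> 'c::t2_space" and g :: "'c \<Rightarrow> 'd::topological_space"
  assumes K: "compact K" and p: "continuous_on K p" and L: "p ` K = L"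
    and gp: "continuous_on K (\<lambda>k. g (p k))"
  shows "continuous_on L g"
  unfolding continuous_on_closed_invariant
proof (intro allI impI)
  fix B :: "'d set" assume B: "closed B"
  obtain A where A: "closed A" "A \<inter> K = (\<lambda>k. g (p k)) -` B \<inter> K"
    using gp B unfolding continuous_on_closed_invariant by blast
  have "compact (A \<inter> K)" using compact_Int_closed[OF K A(1)] by (simp add: Int_commute)
  moreover have "continuous_on (A \<inter> K) p" by (rule continuous_on_subset[OF p]) auto
  ultimately have "compact (p ` (A \<inter> K))" by (simp add: compact_continuous_image)
  then have "closed (p ` (A \<inter> K))" by (rule compact_imp_closed)
  moreover have "p ` (A \<inter> K) \<inter> L = g -` B \<inter> L"
    using A(2) L by blast
  ultimately show "\<exists>A. closed A \<and> A \<inter> L = g -` B \<inter> L" by blast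
qed

context
  fixes \<theta> :: "'a::t2_space \<Rightarrow> 'a" and f :: "'a \<Rightarrow> complex"
  assumes erg: "top_ergodic \<theta>" and fc: "\<forall>x. f x \<in> circle"
begin

lemma G_closed: "closed (Gp (fixed_alg \<theta> f))"
  by (rule Gp_closed) (rule fixed_algD(1))

lemma G_circle_erg:
  assumes G: "Gp (fixed_alg \<theta> f) = circle"
  shows "skew_ergodic \<theta> f"
  unfolding skew_ergodic_def
proof
  fix h assume h: "h \<in> fixed_alg \<theta> f"
  have rotinv: "h (x, w) = h (x, 1)" if "w \<in> circle" for x w
  proof -
    have "w \<in> Gp (fixed_alg \<theta> f)" using G that by simp
    then have "\<forall>x u. u \<in> circle \<longrightarrow> h (x, w * u) = h (x, u)" using h by (simp add: Gp_def)
    then have "h (x, w * 1) = h (x, 1)" using one_in_circle by blast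
    then show ?thesis by simp
  qed
  define g where "g = (\<lambda>x. h (x, 1))"
  have gc: "continuous_on UNIV g" unfolding g_def
    by (rule continuous_on_compose2[OF fixed_algD(1)[OF h]]) (auto intro!: continuous_intros)
  have gi: "g (\<theta> x) = g x" for x
  proof -
    have fx: "f x \<in> circle" using fc by blast
    have "g (\<theta> x) = h (\<theta> x, f x * cnj (f x))" using circle_mult_cnj[OF fx] by (simp add: g_def)
    also have "\<dots> = h (x, cnj (f x))" by (rule fixed_algD(3)[OF h circle_cnj[OF fx]])
    also have "\<dots> = g x" unfolding g_def by (rule rotinv[OF circle_cnj[OF fx]])
    finally show ?thesis .
  qed
  have "\<forall>p\<in>UNIV \<times> circle. h p = g undefined"
  proof
    fix p :: "'a \<times> complex" assume p: "p \<in> UNIV \<times> circle"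
    then obtain x w where xw: "p = (x, w)" "w \<in> circle" by auto
    have "h p = g x" using rotinv[OF xw(2)] xw(1) by (simp add: g_def)
    also have "\<dots> = g undefined" by (rule erg_const_c[OF erg fc gc gi])
    finally show "h p = g undefined" .
  qed
  then show "\<exists>c. \<forall>p\<in>UNIV \<times> circle. h p = c" by blast
qed

end

definition rt :: "nat \<Rightarrow> complex \<Rightarrow> complex" where
  "rt m z = (SOME w. w \<in> circle \<and> w ^ m = z)"

definition Phi :: "nat \<Rightarrow> ('b \<times> complex \<Rightarrow> complex) \<Rightarrow> complex \<Rightarrow> complex" where
  "Phi m h = (\<lambda>z. if z \<in> circle then h (undefined, rt m z) else 0)"

lemma rt:
  assumes m: "m > 0" and z: "z \<in> circle"
  shows "rt m z \<in> circle" "rt m z ^ m = z"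
proof -
  have "cis (Arg z / m) ^ m = cis (real m * (Arg z / m))" by (rule Complex.DeMoivre)
  also have "real m * (Arg z / m) = Arg z" using m by simp
  also have "cis (Arg z) = z" by (rule circle_cis[OF z])
  finally have "\<exists>w. w \<in> circle \<and> w ^ m = z" using cis_in_circle by blast
  then have "rt m z \<in> circle \<and> rt m z ^ m = z" unfolding rt_def by (rule someI_ex)
  then show "rt m z \<in> circle" "rt m z ^ m = z" by auto
qed

lemma circle_pow: "w \<in> circle \<Longrightarrow> w ^ m \<in> circle"
  by (simp add: in_circle norm_power)

lemma Phi_add: "Phi m (\<lambda>p. g p + h p) = (\<lambda>z. Phi m g z + Phi m h z)"
  by (auto simp: Phi_def fun_eq_iff)
lemma Phi_mult: "Phi m (\<lambda>p. g p * h p) = (\<lambda>z. Phi m g z * Phi m h z)"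
  by (auto simp: Phi_def fun_eq_iff)
lemma Phi_scale: "Phi m (\<lambda>p. c * h p) = (\<lambda>z. c * Phi m h z)"
  by (auto simp: Phi_def fun_eq_iff)
lemma Phi_cnj: "Phi m (\<lambda>p. cnj (h p)) = (\<lambda>z. cnj (Phi m h z))"
  by (auto simp: Phi_def fun_eq_iff)
lemma Phi_diff: "Phi m (\<lambda>p. g p - h p) = (\<lambda>z. Phi m g z - Phi m h z)"
  by (auto simp: Phi_def fun_eq_iff)
lemma Phi_cst: "m > 0 \<Longrightarrow> Phi m (cst c) = (\<lambda>z. if z \<in> circle then c else 0)"
  by (auto simp: Phi_def fun_eq_iff cst_def rt)

context
  fixes \<theta> :: "'a::t2_space \<Rightarrow> 'a" and f :: "'a \<Rightarrow> complex" and m :: nat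
  assumes erg: "top_ergodic \<theta>" and fc: "\<forall>x. f x \<in> circle"
    and mpos: "m > 0" and Gm: "Gp (fixed_alg \<theta> f) = {c \<in> circle. c ^ m = 1}"
begin

lemma same_pow:
  assumes h: "h \<in> fixed_alg \<theta> f" and w: "w \<in> circle" and w': "w' \<in> circle"
    and e: "w ^ m = w' ^ m"
  shows "h (x, w') = h (x, w)"
proof -
  define c where "c = w' * cnj w"
  have cc: "c \<in> circle" unfolding c_def by (intro circle_mult w' circle_cnj w)
  have "c ^ m = w' ^ m * cnj w ^ m" by (simp add: c_def power_mult_distrib)
  also have "\<dots> = (w * cnj w) ^ m" using e by (simp add: power_mult_distrib)
  also have "\<dots> = 1" by (simp add: circle_mult_cnj[OF w])
  finally have "c \<in> Gp (fixed_alg \<theta> f)" using Gm cc by simp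
  then have "h (x, c * w) = h (x, w)" using h w by (auto simp: Gp_def)
  moreover have "c * w = w'" unfolding c_def using circle_cnj_mult[OF w] by (simp add: mult.assoc)
  ultimately show ?thesis by simp
qed

lemma Phi_pow:
  assumes h: "h \<in> fixed_alg \<theta> f" and w: "w \<in> circle"
  shows "Phi m h (w ^ m) = h (undefined, w)"
proof -
  have wm: "w ^ m \<in> circle" by (rule circle_pow[OF w])
  have "Phi m h (w ^ m) = h (undefined, rt m (w ^ m))" using wm by (simp add: Phi_def)
  also have "\<dots> = h (undefined, w)" by (rule same_pow[OF h w rt(1)[OF mpos wm]]) (simp add: rt(2)[OF mpos wm])
  finally show ?thesis .
qed

lemma pow_image: "(\<lambda>w. w ^ m) ` circle = circle"
proof
  show "(\<lambda>w. w ^ m) ` circle \<subseteq> circle" using circle_pow by blast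
  show "circle \<subseteq> (\<lambda>w. w ^ m) ` circle"
  proof
    fix z assume z: "z \<in> circle"
    show "z \<in> (\<lambda>w. w ^ m) ` circle" using rt[OF mpos z] by (metis image_eqI)
  qed
qed

lemma Phi_cfun:
  assumes h: "h \<in> fixed_alg \<theta> f"
  shows "Phi m h \<in> Cfun circle"
proof -
  have "continuous_on circle (\<lambda>w. h (undefined, w))" by (rule cont_fib[OF fixed_algD(1)[OF h]])
  then have "continuous_on circle (\<lambda>w. Phi m h (w ^ m))"
    by (rule continuous_on_cong[THEN iffD1, rotated 2]) (auto simp: Phi_pow[OF h])
  moreover have pc: "continuous_on circle (\<lambda>w::complex. w ^ m)" by (intro continuous_intros)
  ultimately have "continuous_on circle (Phi m h)"
    using quot_cont[OF compact_circle pc pow_image] by blast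
  then show ?thesis by (auto simp: Cfun_def Phi_def)
qed

lemma Phi_fib:
  assumes h: "h \<in> fixed_alg \<theta> f" and w: "w \<in> circle"
  shows "h (undefined, w) = Phi m h (w ^ m)"
  using Phi_pow[OF h w] by simp

lemma Phi_inj: "inj_on (Phi m) (fixed_alg \<theta> f)"
proof (rule inj_onI)
  fix g h assume g: "g \<in> fixed_alg \<theta> f" and h: "h \<in> fixed_alg \<theta> f" and e: "Phi m g = Phi m h"
  have d: "(\<lambda>p. g p - h p) \<in> fixed_alg \<theta> f" by (rule fa_diff[OF erg fc g h])
  have "g p - h p = 0" for p
    by (rule fib_zero[OF erg fc d, of undefined]) (simp add: Phi_fib[OF g] Phi_fib[OF h] e)
  then show "g = h" by auto
qed

lemma Phi_sep:
  assumes z: "z \<in> circle" and z': "z' \<in> circle" and ne: "z \<noteq> z'"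
  shows "\<exists>h\<in>fixed_alg \<theta> f. Phi m h z \<noteq> Phi m h z'"
proof -
  define w where "w = rt m z"
  define w' where "w' = rt m z'"
  have w: "w \<in> circle" "w ^ m = z" using rt[OF mpos z] by (auto simp: w_def)
  have w': "w' \<in> circle" "w' ^ m = z'" using rt[OF mpos z'] by (auto simp: w'_def)
  define c where "c = w' * cnj w"
  have cc: "c \<in> circle" unfolding c_def by (intro circle_mult w' circle_cnj w)
  have "c ^ m \<noteq> 1"
  proof
    assume c1: "c ^ m = 1"
    have "c ^ m * w ^ m = w' ^ m"
      unfolding c_def power_mult_distrib[symmetric] using circle_cnj_mult[OF w(1)]
      by (simp add: mult.assoc)
    then have "w ^ m = w' ^ m" using c1 by simp
    then show False using w w' ne by simp
  qed
  then have "c \<notin> Gp (fixed_alg \<theta> f)" using Gm by simp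
  then obtain h x v where h: "h \<in> fixed_alg \<theta> f" and v: "v \<in> circle"
    and hv: "h (x, c * v) \<noteq> h (x, v)"
    using cc unfolding Gp_def by blast
  define d where "d = (\<lambda>p. rot c h p - h p)"
  have d: "d \<in> fixed_alg \<theta> f" unfolding d_def
    by (intro fa_diff[OF erg fc] fa_rot[OF erg fc] h cc)
  have "d (x, v) \<noteq> 0" using hv by (simp add: d_def rot_def)
  then obtain v0 where v0: "v0 \<in> circle" "d (undefined, v0) \<noteq> 0"
    using fib_zero[OF erg fc d, of undefined "(x, v)"] by blast
  define b where "b = v0 * cnj w"
  have bc: "b \<in> circle" unfolding b_def by (intro circle_mult v0(1) circle_cnj w(1))
  define h2 where "h2 = rot b h"
  have h2: "h2 \<in> fixed_alg \<theta> f" unfolding h2_def by (rule fa_rot[OF erg fc h bc])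
  have "Phi m h2 z = h2 (undefined, w)" using Phi_pow[OF h2 w(1)] w(2) by simp
  also have "\<dots> = h (undefined, v0)" unfolding h2_def rot_def b_def
    using circle_cnj_mult[OF w(1)] by (simp add: mult.assoc)
  finally have 1: "Phi m h2 z = h (undefined, v0)" .
  have "Phi m h2 z' = h2 (undefined, w')" using Phi_pow[OF h2 w'(1)] w'(2) by simp
  also have "\<dots> = h (undefined, c * v0)" unfolding h2_def rot_def b_def c_def
    by (simp add: mult_ac)
  finally have 2: "Phi m h2 z' = h (undefined, c * v0)" .
  have "h (undefined, c * v0) \<noteq> h (undefined, v0)" using v0(2) by (simp add: d_def rot_def)
  then show ?thesis using 1 2 h2 by metis
qed

end

definition cext :: "(complex \<Rightarrow> real) \<Rightarrow> complex \<Rightarrow> complex" where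
  "cext r = (\<lambda>z. if z \<in> circle then complex_of_real (r z) else 0)"

context
  fixes \<theta> :: "'a::t2_space \<Rightarrow> 'a" and f :: "'a \<Rightarrow> complex" and m :: nat
  assumes erg: "top_ergodic \<theta>" and fc: "\<forall>x. f x \<in> circle"
    and mpos: "m > 0" and Gm: "Gp (fixed_alg \<theta> f) = {c \<in> circle. c ^ m = 1}"
begin

abbreviation "AA \<equiv> fixed_alg \<theta> f"
abbreviation "BB \<equiv> Phi m ` fixed_alg \<theta> f"

lemma B_add: "b1 \<in> BB \<Longrightarrow> b2 \<in> BB \<Longrightarrow> (\<lambda>z. b1 z + b2 z) \<in> BB"
  by (auto simp: Phi_add[symmetric] intro!: imageI fa_add[OF erg fc])
lemma B_diff: "b1 \<in> BB \<Longrightarrow> b2 \<in> BB \<Longrightarrow> (\<lambda>z. b1 z - b2 z) \<in> BB"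
  by (auto simp: Phi_diff[symmetric] intro!: imageI fa_diff[OF erg fc])
lemma B_mult: "b1 \<in> BB \<Longrightarrow> b2 \<in> BB \<Longrightarrow> (\<lambda>z. b1 z * b2 z) \<in> BB"
  by (auto simp: Phi_mult[symmetric] intro!: imageI fa_mult[OF erg fc])
lemma B_scale: "b \<in> BB \<Longrightarrow> (\<lambda>z. c * b z) \<in> BB"
  by (auto simp: Phi_scale[symmetric] intro!: imageI fa_scale[OF erg fc])
lemma B_cnj: "b \<in> BB \<Longrightarrow> (\<lambda>z. cnj (b z)) \<in> BB"
  by (auto simp: Phi_cnj[symmetric] intro!: imageI fa_cnj[OF erg fc])
lemma B_cst: "(\<lambda>z. if z \<in> circle then c else 0) \<in> BB"
proof -
  have "Phi m (cst c :: 'a \<times> complex \<Rightarrow> complex) \<in> BB" using fa_cst[OF erg fc, of c] by blast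
  then show ?thesis by (simp only: Phi_cst[OF mpos])
qed

lemma B_cfun: "b \<in> BB \<Longrightarrow> b \<in> Cfun circle"
  using Phi_cfun[OF erg fc mpos Gm] by blast

lemma B_limit:
  assumes FB: "\<And>n. F n \<in> BB" and lim: "uniform_limit circle F k sequentially"
    and k: "k \<in> Cfun circle"
  shows "k \<in> BB"
proof -
  have "\<forall>n. \<exists>h. h \<in> AA \<and> F n = Phi m h" using FB by blast
  from choice[OF this] obtain hs where hs': "\<forall>n. hs n \<in> AA \<and> F n = Phi m (hs n)" by blast
  then have hs: "\<And>n. hs n \<in> AA" "\<And>n. F n = Phi m (hs n)" by auto
  have FC: "uniformly_Cauchy_on circle F"
    by (rule uniformly_convergent_Cauchy) (auto simp: uniformly_convergent_on_def intro: lim)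
  have "uniformly_Cauchy_on (UNIV \<times> circle) hs"
  proof (rule uniformly_Cauchy_onI)
    fix e :: real assume e: "e > 0"
    then obtain M where M: "\<forall>z\<in>circle. \<forall>i\<ge>M. \<forall>j\<ge>M. dist (F i z) (F j z) < e/2"
      using FC unfolding uniformly_Cauchy_on_def by (meson half_gt_zero)
    have "dist (hs i p) (hs j p) < e" if "i \<ge> M" "j \<ge> M" for i j p
    proof -
      have d: "(\<lambda>p. hs i p - hs j p) \<in> AA" by (rule fa_diff[OF erg fc hs(1) hs(1)])
      have "norm (hs i (undefined, w) - hs j (undefined, w)) \<le> e/2" if w: "w \<in> circle" for w
      proof -
        have "hs i (undefined, w) - hs j (undefined, w) = F i (w ^ m) - F j (w ^ m)"
          using Phi_pow[OF erg fc mpos Gm hs(1) w] hs(2) by simp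
        moreover have "dist (F i (w ^ m)) (F j (w ^ m)) < e/2"
          using M circle_pow[OF w] \<open>i \<ge> M\<close> \<open>j \<ge> M\<close> by blast
        ultimately show ?thesis by (simp add: dist_norm)
      qed
      then have "norm (hs i p - hs j p) \<le> e/2"
        using fib_bound[OF erg fc d, of undefined "e/2" p] by simp
      then show ?thesis using e by (simp add: dist_norm)
    qed
    then show "\<exists>M. \<forall>x\<in>UNIV \<times> circle. \<forall>i\<ge>M. \<forall>j\<ge>M. dist (hs i x) (hs j x) < e" by blast
  qed
  then have "uniformly_convergent_on (UNIV \<times> circle) hs" by (rule Cauchy_uniformly_convergent)
  then obtain H where ul: "uniform_limit (UNIV \<times> circle) hs H sequentially"
    unfolding uniformly_convergent_on_def by blast
  define H' where "H' = (\<lambda>p. if p \<in> UNIV \<times> circle then H p else 0)"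
  have Hc: "continuous_on (UNIV \<times> circle) H"
    by (rule uniform_limit_theorem[OF _ ul]) (auto intro: always_eventually fixed_algD(1)[OF hs(1)])
  have H'A: "H' \<in> AA"
  proof (rule fixed_algI)
    show "continuous_on (UNIV \<times> circle) H'"
      using Hc by (rule continuous_on_cong[THEN iffD1, rotated 2]) (auto simp: H'_def)
    show "H' (x, w) = 0" if "w \<notin> circle" for x w using that by (simp add: H'_def)
    show "H' (\<theta> x, f x * w) = H' (x, w)" if w: "w \<in> circle" for x w
    proof -
      have fw: "f x * w \<in> circle" using fc w by (simp add: circle_mult)
      have t1: "(\<lambda>n. hs n (\<theta> x, f x * w)) \<longlonglongrightarrow> H (\<theta> x, f x * w)"
        by (rule tendsto_uniform_limitI[OF ul]) (simp add: fw)
      have t2: "(\<lambda>n. hs n (x, w)) \<longlonglongrightarrow> H (x, w)"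
        by (rule tendsto_uniform_limitI[OF ul]) (simp add: w)
      have "(\<lambda>n. hs n (\<theta> x, f x * w)) = (\<lambda>n. hs n (x, w))"
        using fixed_algD(3)[OF hs(1) w] by simp
      then have "H (\<theta> x, f x * w) = H (x, w)" using t1 t2 LIMSEQ_unique by metis
      then show ?thesis using w fw by (simp add: H'_def)
    qed
  qed
  have "Phi m H' = k"
  proof
    fix z show "Phi m H' z = k z"
    proof (cases "z \<in> circle")
      case True
      have rz: "rt m z \<in> circle" by (rule rt(1)[OF mpos True])
      have t1: "(\<lambda>n. hs n (undefined, rt m z)) \<longlonglongrightarrow> H (undefined, rt m z)"
        by (rule tendsto_uniform_limitI[OF ul]) (simp add: rz)
      have t2: "(\<lambda>n. F n z) \<longlonglongrightarrow> k z" by (rule tendsto_uniform_limitI[OF lim True])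
      have "(\<lambda>n. F n z) = (\<lambda>n. hs n (undefined, rt m z))"
        using hs(2) True by (simp add: Phi_def)
      then have "H (undefined, rt m z) = k z" using t1 t2 LIMSEQ_unique by metis
      then show ?thesis using True rz by (simp add: Phi_def H'_def)
    next
      case False
      then show ?thesis using k by (simp add: Phi_def Cfun_def)
    qed
  qed
  then show ?thesis using H'A by blast
qed

end

context
  fixes \<theta> :: "'a::t2_space \<Rightarrow> 'a" and f :: "'a \<Rightarrow> complex" and m :: nat
  assumes erg: "top_ergodic \<theta>" and fc: "\<forall>x. f x \<in> circle"
    and mpos: "m > 0" and Gm: "Gp (fixed_alg \<theta> f) = {c \<in> circle. c ^ m = 1}"
begin

lemma cext_cfun: "continuous_on circle r \<Longrightarrow> cext r \<in> Cfun circle"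
proof -
  assume r: "continuous_on circle r"
  have "continuous_on circle (\<lambda>z. complex_of_real (r z))" by (intro continuous_intros r)
  then have "continuous_on circle (cext r)"
    by (rule continuous_on_cong[THEN iffD1, rotated 2]) (auto simp: cext_def)
  then show ?thesis by (auto simp: Cfun_def cext_def)
qed

lemma B_real:
  assumes r: "continuous_on circle r"
  shows "cext r \<in> Phi m ` fixed_alg \<theta> f"
proof -
  let ?B = "Phi m ` fixed_alg \<theta> f"
  let ?R = "{r. cext r \<in> ?B}"
  have Bc: "b \<in> ?B \<Longrightarrow> b \<in> Cfun circle" for b using B_cfun[OF erg fc mpos Gm] by blast
  interpret SW: function_ring_on ?R circle
  proof unfold_locales
    show "compact circle" by (rule compact_circle)
    show "continuous_on circle r" if "r \<in> ?R" for r
    proof -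
      have "continuous_on circle (cext r)" using Bc that by (auto simp: Cfun_def)
      then have "continuous_on circle (\<lambda>z. Re (cext r z))" by (intro continuous_intros)
      then show ?thesis by (rule continuous_on_cong[THEN iffD1, rotated 2]) (auto simp: cext_def)
    qed
    show "(\<lambda>x. r x + s x) \<in> ?R" if "r \<in> ?R" "s \<in> ?R" for r s
    proof -
      have "cext (\<lambda>x. r x + s x) = (\<lambda>z. cext r z + cext s z)" by (auto simp: cext_def fun_eq_iff)
      then show ?thesis using B_add[OF erg fc mpos Gm] that by simp
    qed
    show "(\<lambda>x. r x * s x) \<in> ?R" if "r \<in> ?R" "s \<in> ?R" for r s
    proof -
      have "cext (\<lambda>x. r x * s x) = (\<lambda>z. cext r z * cext s z)" by (auto simp: cext_def fun_eq_iff)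
      then show ?thesis using B_mult[OF erg fc mpos Gm] that by simp
    qed
    show "(\<lambda>_. c) \<in> ?R" for c
    proof -
      have "cext (\<lambda>_. c) = (\<lambda>z. if z \<in> circle then complex_of_real c else 0)" by (simp add: cext_def)
      then show ?thesis using B_cst[OF erg fc mpos Gm] by simp
    qed
    show "\<exists>r\<in>?R. r x \<noteq> r y" if xy: "x \<in> circle" "y \<in> circle" "x \<noteq> y" for x y
    proof -
      obtain h where h: "h \<in> fixed_alg \<theta> f" and hxy: "Phi m h x \<noteq> Phi m h y"
        using Phi_sep[OF erg fc mpos Gm xy] by blast
      define b where "b = Phi m h"
      have bB: "b \<in> ?B" using h by (simp add: b_def)
      have b0: "z \<notin> circle \<Longrightarrow> b z = 0" for z using Bc[OF bB] by (simp add: Cfun_def)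
      have e1: "cext (\<lambda>z. Re (b z)) = (\<lambda>z. (1/2) * (b z + cnj (b z)))"
        by (auto simp: cext_def fun_eq_iff b0 complex_add_cnj)
      have e2: "cext (\<lambda>z. Im (b z)) = (\<lambda>z. (- \<i> / 2) * (b z - cnj (b z)))"
        by (auto simp: cext_def fun_eq_iff b0 complex_diff_cnj complex_eq_iff)
      have r1: "(\<lambda>z. Re (b z)) \<in> ?R" unfolding mem_Collect_eq e1
        by (intro B_scale[OF erg fc mpos Gm] B_add[OF erg fc mpos Gm] B_cnj[OF erg fc mpos Gm] bB)
      have r2: "(\<lambda>z. Im (b z)) \<in> ?R" unfolding mem_Collect_eq e2
        by (intro B_scale[OF erg fc mpos Gm] B_diff[OF erg fc mpos Gm] B_cnj[OF erg fc mpos Gm] bB)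
      have "Re (b x) \<noteq> Re (b y) \<or> Im (b x) \<noteq> Im (b y)" using hxy by (auto simp: b_def complex_eq_iff)
      then show ?thesis
      proof (elim disjE)
        assume "Re (b x) \<noteq> Re (b y)"
        then show ?thesis by (intro bexI[OF _ r1]) simp
      next
        assume "Im (b x) \<noteq> Im (b y)"
        then show ?thesis by (intro bexI[OF _ r2]) simp
      qed
    qed
  qed
  obtain F where F: "F \<in> UNIV \<rightarrow> ?R" and lim: "uniform_limit circle F r sequentially"
    using SW.Stone_Weierstrass[OF r] by blast
  have FB: "cext (F n) \<in> ?B" for n using F by auto
  have lim2: "uniform_limit circle (\<lambda>n. cext (F n)) (cext r) sequentially"
  proof -
    have dd: "z \<in> circle \<Longrightarrow> dist (cext g z) (cext r z) = dist (g z) (r z)" for g z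
      by (simp add: cext_def dist_of_real)
    show ?thesis using lim unfolding uniform_limit_iff by (simp add: dd cong: ball_cong)
  qed
  show ?thesis by (rule B_limit[OF erg fc mpos Gm FB lim2 cext_cfun[OF r]])
qed

lemma B_all:
  assumes k: "k \<in> Cfun circle"
  shows "k \<in> Phi m ` fixed_alg \<theta> f"
proof -
  have kc: "continuous_on circle k" and k0: "\<And>z. z \<notin> circle \<Longrightarrow> k z = 0" using k by (auto simp: Cfun_def)
  have c1: "continuous_on circle (\<lambda>z. Re (k z))" by (intro continuous_intros kc)
  have c2: "continuous_on circle (\<lambda>z. Im (k z))" by (intro continuous_intros kc)
  have "k = (\<lambda>z. cext (\<lambda>z. Re (k z)) z + \<i> * cext (\<lambda>z. Im (k z)) z)"
    by (auto simp: fun_eq_iff cext_def k0 complex_eq_iff)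
  also have "\<dots> \<in> Phi m ` fixed_alg \<theta> f"
    by (intro B_add[OF erg fc mpos Gm] B_scale[OF erg fc mpos Gm] B_real c1 c2)
  finally show ?thesis .
qed

lemma iso: "star_iso (fixed_alg \<theta> f) (Cfun circle) (Phi m)"
  unfolding star_iso_def
proof (intro conjI ballI allI)
  show "bij_betw (Phi m) (fixed_alg \<theta> f) (Cfun circle)"
    unfolding bij_betw_def
    using Phi_inj[OF erg fc mpos Gm] Phi_cfun[OF erg fc mpos Gm] B_all by blast
qed (rule Phi_scale | rule Phi_add | rule Phi_mult | rule Phi_cnj)+

end

theorem mainTheorem18:
  fixes \<theta> :: "'a::t2_space \<Rightarrow> 'a" and f :: "'a \<Rightarrow> complex"
  assumes "compact (UNIV :: 'a set)"
    and "\<exists>\<theta>'. homeomorphism UNIV UNIV \<theta> \<theta>'"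
    and "top_ergodic \<theta>"
    and "continuous_on UNIV f" and "\<forall>x. f x \<in> circle"
  shows "(star_isomorphic_to_C (fixed_alg \<theta> f) \<or> star_isomorphic (fixed_alg \<theta> f) (Cfun circle))
         \<and> (star_isomorphic_to_C (fixed_alg \<theta> f) \<longleftrightarrow> skew_ergodic \<theta> f)"
proof -
  have erg: "top_ergodic \<theta>" and fc: "\<forall>x. f x \<in> circle" using assms by auto
  have iff: "star_isomorphic_to_C (fixed_alg \<theta> f) \<longleftrightarrow> skew_ergodic \<theta> f"
    using SE1[OF erg fc] SE2[OF erg fc] by blast
  have "star_isomorphic_to_C (fixed_alg \<theta> f) \<or> star_isomorphic (fixed_alg \<theta> f) (Cfun circle)"
  proof (cases "skew_ergodic \<theta> f")
    case True
    then show ?thesis using SE1[OF erg fc] by blast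
  next
    case False
    have "Gp (fixed_alg \<theta> f) = circle \<or>
          (\<exists>m::nat. m > 0 \<and> Gp (fixed_alg \<theta> f) = {c \<in> circle. c ^ m = 1})"
      by (rule circle_subgroup[OF G_closed[OF erg fc] Gp_sub Gp_one Gp_mult Gp_cnj])
    then show ?thesis
    proof (elim disjE exE conjE)
      assume "Gp (fixed_alg \<theta> f) = circle"
      then have "skew_ergodic \<theta> f" by (rule G_circle_erg[OF erg fc])
      then show ?thesis using False by blast
    next
      fix m :: nat assume "m > 0" "Gp (fixed_alg \<theta> f) = {c \<in> circle. c ^ m = 1}"
      then have "star_iso (fixed_alg \<theta> f) (Cfun circle) (Phi m)" by (rule iso[OF erg fc])
      then show ?thesis unfolding star_isomorphic_def by blast
    qed
  qed
  then show ?thesis using iff by blast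
qed

end
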